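(* Let $\mu>1$, $\gamma=\mu\gamma^N_1$, let $p\ge2$ and $q=p/(p-1)$, and let $(\rho_k)_{k\ge1}$ be an increasing positive sequence with $K_q<\infty$. Then there exists a constant $B_p<\infty$ (depending on $p,\mu,(\rho_k)$ but not on $N$ or $\delta$) such that for all $N\ge3$, all $\delta>0$ and all $z\in C_\delta$, $$\|x(Nz)\|_p^p\le\delta^p\,N\,B_p.$$
   Context: $\gamma^N_1=\frac1{2\sin^2(\pi/N)}$; $\lambda_{k,N}=-1+2\gamma\sin^2(k\pi/N)$ for $0\le k\le N-1$ (indices modulo $N$). $\omega=e^{2\pi i/N}$. $\widehat{\mathbb{R}}^N=\{z\in\mathbb{C}^N:z_k=\overline{z_{N-k}}\ \forall k\}$ (so $z_0\in\mathbb{R}$). For $z\in\widehat{\mathbb{R}}^N$, $x(Nz)\in\mathbb{R}^N$ has components $x_j(Nz)=\sum_{k=0}^{N-1}\omega^{jk}z_k$ (inverse map: $z_k=\frac1N\sum_j\omega^{-jk}x_j$). Given an increasing positive sequence $(\rho_k)_{k\ge1}$, set $r_{0,N}=1$ and $r_{k,N}=r_{N-k,N}=\rho_k$ for $1\le k\le\lfloor N/2\rfloor$; $K_p=\big(\sum_{k\ge1}\rho_k^p/k^p\big)^{1/p}$; for $\delta>0$, $C_\delta=\{z\in\widehat{\mathbb{R}}^N:|z_k|\le\delta\,r_{k,N}/\sqrt{|\lambda_{k,N}|},\ 0\le k\le N-1\}$. $\|y\|_p=(\sum_j|y_j|^p)^{1/p}$. *)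

theory Defs
  imports "HOL-Analysis.Analysis"
begin

definition gamma1 :: "nat \<Rightarrow> real" where
  "gamma1 N = 1 / (2 * (sin (pi / real N))^2)"

definition lam :: "real \<Rightarrow> nat \<Rightarrow> nat \<Rightarrow> real" where
  "lam \<gamma> N k = -1 + 2 * \<gamma> * (sin (real k * pi / real N))^2"

definition omega :: "nat \<Rightarrow> complex" where
  "omega N = cis (2 * pi / real N)"

text \<open>hat R^N: vectors z_0..z_{N-1} (as functions on nat, only indices < N matter)
  with z_k = conj z_{N-k}, indices modulo N.\<close>
definition hatR :: "nat \<Rightarrow> (nat \<Rightarrow> complex) set" where
  "hatR N = {z. \<forall>k<N. z k = cnj (z ((N - k) mod N))}"

definition xvec :: "nat \<Rightarrow> (nat \<Rightarrow> complex) \<Rightarrow> nat \<Rightarrow> complex" where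
  "xvec N z j = (\<Sum>k<N. omega N ^ (j * k) * z k)"

text \<open>r_{0,N} = 1, r_{k,N} = r_{N-k,N} = rho_k for 1 <= k <= floor(N/2)\<close>
definition rr :: "(nat \<Rightarrow> real) \<Rightarrow> nat \<Rightarrow> nat \<Rightarrow> real" where
  "rr \<rho> N k = (if k mod N = 0 then 1 else \<rho> (min (k mod N) (N - k mod N)))"

definition Cdelta :: "real \<Rightarrow> real \<Rightarrow> (nat \<Rightarrow> real) \<Rightarrow> nat \<Rightarrow> (nat \<Rightarrow> complex) set" where
  "Cdelta \<delta> \<gamma> \<rho> N = {z \<in> hatR N. \<forall>k<N. cmod (z k) \<le> \<delta> * rr \<rho> N k / sqrt \<bar>lam \<gamma> N k\<bar>}"

definition pnorm_pow :: "real \<Rightarrow> nat \<Rightarrow> (nat \<Rightarrow> complex) \<Rightarrow> real" where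
  "pnorm_pow p N y = (\<Sum>j<N. cmod (y j) powr p)"

end

theory Submission
  imports Defs
begin

lemma omega_pow: "omega N ^ n = cis (real n * (2*pi/real N))"
  unfolding omega_def by (rule Complex.DeMoivre)

lemma orth:
  assumes "k < N" "l < N"
  shows "(\<Sum>j<N. omega N ^ (j*k) * cnj (omega N ^ (j*l))) = (if k = l then of_nat N else 0)"
proof -
  define \<theta> where "\<theta> = 2*pi*(real k - real l)/real N"
  have eq: "omega N ^ (j*k) * cnj (omega N ^ (j*l)) = cis \<theta> ^ j" for j
  proof -
    have "omega N ^ (j*k) * cnj (omega N ^ (j*l)) = cis (real (j*k) * (2*pi/real N) + - (real (j*l) * (2*pi/real N)))"
      by (simp only: omega_pow cis_cnj cis_mult)
    also have "real (j*k) * (2*pi/real N) + - (real (j*l) * (2*pi/real N)) = real j * \<theta>"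
      unfolding \<theta>_def by (cases "N=0") (simp_all add: field_simps)
    finally show ?thesis by (simp add: Complex.DeMoivre)
  qed
  show ?thesis
  proof (cases "k = l")
    case True
    then show ?thesis unfolding eq \<theta>_def by simp
  next
    case False
    have N0: "N > 0" using assms by simp
    have ne: "cis \<theta> \<noteq> 1"
    proof
      assume "cis \<theta> = 1"
      have "cos \<theta> = Re (cis \<theta>)" by simp
      also have "\<dots> = 1" using \<open>cis \<theta> = 1\<close> by simp
      finally have "cos \<theta> = 1" .
      then obtain n::int where n: "\<theta> = real_of_int n * 2 * pi" using cos_one_2pi_int by blast
      have "2*pi*(real k - real l) = \<theta> * real N" using N0 unfolding \<theta>_def by simp
      also have "\<dots> = 2*pi*(n * real N)" using n by (simp add: mult_ac)
      finally have "2*pi*(real k - real l) = 2*pi*(n * real N)" .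
      hence "real k - real l = n * real N" by simp
      hence "real_of_int (int k - int l) = real_of_int (n * int N)" by simp
      hence "int k - int l = n * int N" by (simp only: of_int_eq_iff)
      moreover have "\<bar>int k - int l\<bar> < int N" using assms by linarith
      ultimately have h: "\<bar>n\<bar> * int N < 1 * int N" by (simp add: abs_mult)
      hence "\<bar>n\<bar> < 1" using N0 by (simp add: mult_less_cancel_right)
      hence "n = 0" by simp
      thus False using \<open>int k - int l = n * int N\<close> False by simp
    qed
    have "cis \<theta> ^ N = cis (2*pi*(real k - real l))" using N0 unfolding Complex.DeMoivre \<theta>_def by simp
    also have "\<dots> = 1"
    proof -
      have "real k - real l \<in> \<int>" using Ints_diff Ints_of_nat by blast
      thus ?thesis by (rule cis_multiple_2pi)
    qed
    finally have "(\<Sum>j<N. cis \<theta> ^ j) = 0" using ne by (simp add: geometric_sum)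
    then show ?thesis using False unfolding eq by simp
  qed
qed

lemma parseval:
  "(\<Sum>j<N. (cmod (\<Sum>k<N. omega N ^ (j*k) * v k))^2) = real N * (\<Sum>k<N. (cmod (v k))^2)"
proof -
  have "complex_of_real (\<Sum>j<N. (cmod (\<Sum>k<N. omega N ^ (j*k) * v k))^2)
     = (\<Sum>j<N. (\<Sum>k<N. omega N ^ (j*k) * v k) * cnj (\<Sum>l<N. omega N ^ (j*l) * v l))"
    by (simp only: of_real_sum complex_norm_square)
  also have "\<dots> = (\<Sum>j<N. \<Sum>l<N. \<Sum>k<N. v k * cnj (v l) * (omega N ^ (j*k) * cnj (omega N ^ (j*l))))"
    by (simp add: sum_distrib_left sum_distrib_right mult_ac)
  also have "\<dots> = (\<Sum>l<N. \<Sum>j<N. \<Sum>k<N. v k * cnj (v l) * (omega N ^ (j*k) * cnj (omega N ^ (j*l))))"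
    by (rule sum.swap)
  also have "\<dots> = (\<Sum>l<N. \<Sum>k<N. \<Sum>j<N. v k * cnj (v l) * (omega N ^ (j*k) * cnj (omega N ^ (j*l))))"
    by (rule sum.cong[OF refl], rule sum.swap)
  also have "\<dots> = (\<Sum>k<N. \<Sum>l<N. \<Sum>j<N. v k * cnj (v l) * (omega N ^ (j*k) * cnj (omega N ^ (j*l))))"
    by (rule sum.swap)
  also have "\<dots> = (\<Sum>k<N. \<Sum>l<N. v k * cnj (v l) * (\<Sum>j<N. omega N ^ (j*k) * cnj (omega N ^ (j*l))))"
    by (simp add: sum_distrib_left)
  also have "\<dots> = (\<Sum>k<N. \<Sum>l<N. v k * cnj (v l) * (if k = l then of_nat N else 0))"
    by (intro sum.cong refl) (subst orth, auto)
  also have "\<dots> = (\<Sum>k<N. v k * cnj (v k) * of_nat N)"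
    by (simp add: if_distrib sum.delta cong: if_cong)
  also have "\<dots> = (\<Sum>k<N. complex_of_real (real N * (cmod (v k))^2))"
    by (intro sum.cong refl) (simp only: of_real_mult complex_norm_square of_real_of_nat_eq mult.commute)
  also have "\<dots> = complex_of_real (real N * (\<Sum>k<N. (cmod (v k))^2))"
    by (simp only: of_real_sum sum_distrib_left)
  finally show ?thesis using of_real_eq_iff by blast
qed
lemma norm_omega_pow: "norm (omega N ^ n) = 1"
  by (simp add: omega_def norm_power)

lemma count_bound:
  fixes z :: "nat \<Rightarrow> complex" and a :: "nat \<Rightarrow> real"
  assumes za: "\<forall>k<N. cmod (z k) \<le> a k" and t: "t > 0"
    and big: "(\<Sum>k<N. if lv < a k then a k else 0) \<le> t"
  shows "real (card {j. j<N \<and> 2*t < cmod (xvec N z j)}) * t^2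
          \<le> real N * (\<Sum>k<N. if a k \<le> lv then (a k)^2 else 0)"
proof -
  define v where "v k = (if a k \<le> lv then z k else 0)" for k
  define u where "u k = (if a k \<le> lv then 0 else z k)" for k
  define U where "U j = (\<Sum>k<N. omega N^(j*k) * u k)" for j
  define V where "V j = (\<Sum>k<N. omega N^(j*k) * v k)" for j
  have split: "xvec N z j = U j + V j" for j
    unfolding xvec_def U_def V_def sum.distrib[symmetric]
    by (intro sum.cong refl) (simp add: u_def v_def)
  have ub: "cmod (U j) \<le> t" for j
  proof -
    have "cmod (U j) \<le> (\<Sum>k<N. cmod (omega N^(j*k) * u k))" unfolding U_def by (rule norm_sum)
    also have "\<dots> \<le> (\<Sum>k<N. if lv < a k then a k else 0)"
      by (intro sum_mono) (use za in \<open>auto simp: u_def norm_mult norm_omega_pow\<close>)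
    also have "\<dots> \<le> t" by (rule big)
    finally show ?thesis .
  qed
  let ?E = "{j. j<N \<and> 2*t < cmod (xvec N z j)}"
  have vb: "t^2 \<le> (cmod (V j))^2" if "j \<in> ?E" for j
  proof -
    have "cmod (xvec N z j) \<le> cmod (U j) + cmod (V j)" unfolding split by (rule norm_triangle_ineq)
    hence "t \<le> cmod (V j)" using that ub[of j] by simp
    thus ?thesis using t by (intro power_mono) auto
  qed
  have "real (card ?E) * t^2 = (\<Sum>j\<in>?E. t^2)" by simp
  also have "\<dots> \<le> (\<Sum>j\<in>?E. (cmod (V j))^2)" by (rule sum_mono) (rule vb)
  also have "\<dots> \<le> (\<Sum>j<N. (cmod (V j))^2)" by (rule sum_mono2) auto
  also have "\<dots> = real N * (\<Sum>k<N. (cmod (v k))^2)" unfolding V_def by (rule parseval)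
  also have "\<dots> \<le> real N * (\<Sum>k<N. if a k \<le> lv then (a k)^2 else 0)"
    by (intro mult_left_mono sum_mono) (use za in \<open>auto simp: v_def intro: power_mono\<close>)
  finally show ?thesis .
qed

lemma big_bound:
  fixes a :: "nat \<Rightarrow> real"
  assumes p: "p > 2" and q: "q = p/(p-1)" and S: "S = (\<Sum>k<N. a k powr q)" "S > 0"
    and a0: "\<forall>k<N. 0 \<le> a k" and t: "t > 0"
  shows "(\<Sum>k<N. if (S/t) powr (p-1) < a k then a k else 0) \<le> t"
proof -
  let ?l = "(S/t) powr (p-1)"
  have lpos: "?l > 0" using S t by simp
  have lq: "?l powr (1-q) = t/S"
  proof -
    have "(p-1)*(1-q) = -1" using p q by (simp add: field_simps)
    hence "?l powr (1-q) = (S/t) powr (-1)" by (simp add: powr_powr)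
    also have "\<dots> = t/S" using S t by (simp add: powr_minus_divide)
    finally show ?thesis .
  qed
  have "1 \<le> p/(p-1)" using p by (simp add: le_divide_eq)
  hence q1: "1 - q \<le> 0" using q by simp
  have trm: "(if ?l < a k then a k else 0) \<le> a k powr q * (t/S)" if "k<N" for k
  proof (cases "?l < a k")
    case True
    have ak: "a k > 0" using True lpos by linarith
    have "a k = a k powr q * a k powr (1-q)" using ak by (simp add: powr_add[symmetric])
    also have "\<dots> \<le> a k powr q * ?l powr (1-q)"
      by (rule mult_left_mono, rule powr_mono2'[OF q1 lpos], use True in simp_all)
    finally show ?thesis using True lq by simp
  next
    case False thus ?thesis using a0 that S t by simp
  qed
  have "(\<Sum>k<N. if ?l < a k then a k else 0) \<le> (\<Sum>k<N. a k powr q * (t/S))"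
    by (rule sum_mono) (rule trm, simp)
  also have "\<dots> = S * (t/S)" by (simp only: sum_distrib_right[symmetric] S(1)[symmetric])
  also have "\<dots> = t" using S by simp
  finally show ?thesis .
qed

lemma geom_bound:
  fixes M T s :: real
  assumes M: "M > 0" and s: "s > 0" and T: "T > 0"
  shows "(\<Sum>n\<in>{n. n<L \<and> M/2^n \<le> T}. (M/2^n) powr s) \<le> T powr s / (1 - 2 powr (-s))"
proof -
  define F where "F = {n. n<L \<and> M/2^n \<le> T}"
  define r where "r = (2::real) powr (-s)"
  have r1: "1 < (2::real) powr s" using s by (smt (verit) powr_less_cancel_iff powr_zero_eq_one)
  have r: "0 < r" "r < 1" using r1 by (auto simp: r_def powr_minus_divide)
  have trm: "(M/2^n) powr s = M powr s * r^n" for n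
  proof -
    have "(M/2^n) powr s = M powr s / ((2::real) powr real n) powr s"
      by (simp add: powr_divide powr_realpow)
    also have "((2::real) powr real n) powr s = 2 powr (real n * s)" by (simp add: powr_powr)
    also have "r^n = 2 powr (real n * (-s))" unfolding r_def by (simp add: powr_power)
    hence "r^n = 1 / 2 powr (real n * s)" by (simp add: powr_minus_divide)
    ultimately show ?thesis by simp
  qed
  have fin: "finite F" unfolding F_def by simp
  show ?thesis
  proof (cases "F = {}")
    case True
    thus ?thesis using r unfolding F_def[symmetric] r_def[symmetric] by simp
  next
    case False
    define n0 where "n0 = Min F"
    have n0F: "n0 \<in> F" using fin False n0_def by simp
    have n0le: "n0 \<le> n" if "n \<in> F" for n using fin that n0_def by simp
    have "(\<Sum>n\<in>F. (M/2^n) powr s) = (\<Sum>n\<in>F. M powr s * r^n0 * r^(n-n0))"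
      by (intro sum.cong refl) (simp add: trm power_add[symmetric] n0le)
    also have "\<dots> = M powr s * r^n0 * (\<Sum>n\<in>F. r^(n-n0))" by (simp add: sum_distrib_left)
    also have "(\<Sum>n\<in>F. r^(n-n0)) = (\<Sum>m\<in>(\<lambda>n. n-n0)`F. r^m)"
    proof -
      have "inj_on (\<lambda>n. n-n0) F"
      proof (rule inj_onI)
        fix x y assume "x\<in>F" "y\<in>F" "x-n0 = y-n0"
        thus "x=y" using n0le[of x] n0le[of y] by arith
      qed
      thus ?thesis by (simp add: sum.reindex)
    qed
    also have "\<dots> \<le> (\<Sum>m. r^m)"
      by (rule sum_le_suminf) (use r fin in \<open>auto intro: summable_geometric\<close>)
    also have "\<dots> = 1/(1-r)" using r by (simp add: suminf_geometric)
    finally have A: "(\<Sum>n\<in>F. (M/2^n) powr s) \<le> M powr s * r^n0 * (1/(1-r))"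
      using r M by (simp add: mult_left_mono)
    have "M powr s * r^n0 = (M/2^n0) powr s" by (simp add: trm)
    also have "\<dots> \<le> T powr s" using n0F M s unfolding F_def by (intro powr_mono2) auto
    finally have B: "M powr s * r^n0 \<le> T powr s" .
    have "M powr s * r^n0 * (1/(1-r)) \<le> T powr s * (1/(1-r))"
      using B r by (intro mult_right_mono) auto
    thus ?thesis using A unfolding F_def r_def by simp
  qed
qed

lemma sin_third: fixes x::real assumes "0 \<le> x" "x \<le> pi/2" shows "x/3 \<le> sin x"
proof -
  have b: "\<bar>sin x - (\<Sum>m<3. sin_coeff m * x ^ m)\<bar> \<le> inverse (fact 3) * \<bar>x\<bar> ^ 3"
    by (rule Maclaurin_sin_bound)
  have s: "(\<Sum>m<3. sin_coeff m * x ^ m) = x"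
    by (simp add: numeral_3_eq_3 sin_coeff_def)
  have "x \<le> 2" using assms pi_less_4 by linarith
  hence x2: "x*x \<le> 4" using assms mult_mono[of x 2 x 2] by linarith
  have "x - x^3/6 \<le> sin x" using b s assms by (simp add: abs_if fact_numeral split: if_splits)
  moreover have "x^3/6 \<le> 2*x/3" using x2 assms mult_right_mono[OF x2 assms(1)] by (simp add: power3_eq_cube)
  ultimately show ?thesis by linarith
qed
lemma lam_bound:
  assumes mu: "\<mu> > 1" and N: "N \<ge> 2" and k: "1 \<le> k" "k < N"
  shows "(\<mu> - 1) * (real (min k (N-k)))^2 / 9 \<le> lam (\<mu> * gamma1 N) N k"
proof -
  define m where "m = min k (N-k)"
  have m1: "1 \<le> m" and m2: "2*m \<le> N" using k unfolding m_def by auto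
  define \<theta> where "\<theta> = pi / real N"
  define x where "x = real m * pi / real N"
  have Npos: "real N > 0" using N by simp
  have sk: "sin (real k * pi / real N) = sin x"
  proof (cases "m = k")
    case True thus ?thesis unfolding x_def by simp
  next
    case False
    hence mk: "m = N - k" unfolding m_def by auto
    have "real k * pi / real N = pi - x" unfolding x_def mk using k Npos
      by (simp add: of_nat_diff field_simps)
    thus ?thesis by (simp add: sin_pi_minus)
  qed
  have th0: "0 < \<theta>" unfolding \<theta>_def using Npos by simp
  have thx: "\<theta> \<le> x" unfolding \<theta>_def x_def using m1 Npos by (simp add: divide_right_mono)
  have xpi: "x \<le> pi/2"
  proof -
    have "real (2*m) \<le> real N" using m2 by linarith
    hence "2 * real m * pi \<le> real N * pi" by (simp add: mult_right_mono)
    thus ?thesis unfolding x_def using Npos by (simp add: field_simps)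
  qed
  have sth: "0 < sin \<theta>" using th0 thx xpi by (intro sin_gt_zero) auto
  have s1: "sin \<theta> \<le> sin x" using th0 thx xpi by (intro sin_monotone_2pi_le) auto
  have s2: "x/3 \<le> sin x" using sin_third[of x] th0 thx xpi by simp
  have s3: "sin \<theta> \<le> \<theta>" using sin_x_le_x[of \<theta>] th0 by simp
  define R where "R = (sin x)^2 / (sin \<theta>)^2"
  have R1: "1 \<le> R" unfolding R_def using s1 sth by (simp add: power_mono)
  have R2: "(real m)^2 / 9 \<le> R"
  proof -
    have "x / \<theta> = real m" unfolding x_def \<theta>_def using Npos by simp
    hence "(real m)^2 / 9 = (x/\<theta>)^2 / 9" by simp
    also have "\<dots> = (x/3)^2 / \<theta>^2" by (simp add: power_divide)
    also have "\<dots> \<le> (sin x)^2 / \<theta>^2" using s2 th0 thx by (intro divide_right_mono power_mono) auto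
    also have "\<dots> \<le> (sin x)^2 / (sin \<theta>)^2" using s3 sth by (intro divide_left_mono power_mono mult_pos_pos) auto
    finally show ?thesis unfolding R_def .
  qed
  have lamR: "lam (\<mu> * gamma1 N) N k = -1 + \<mu> * R"
    unfolding lam_def gamma1_def R_def sk \<theta>_def[symmetric] using sth by (simp add: field_simps)
  have "(\<mu> - 1) * (real m)^2 / 9 \<le> (\<mu> - 1) * R" using R2 mu by (simp add: mult_left_mono)
  also have "\<dots> \<le> -1 + \<mu> * R" using R1 by (simp add: algebra_simps)
  finally show ?thesis unfolding lamR m_def .
qed

lemma HY:
  fixes z :: "nat \<Rightarrow> complex" and a :: "nat \<Rightarrow> real"
  assumes p: "p > 2" and q: "q = p/(p-1)" and za: "\<forall>k<N. cmod (z k) \<le> a k"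
  shows "(\<Sum>j<N. cmod (xvec N z j) powr p)
         \<le> 4 powr p / (1 - 2 powr (-(p-2))) * real N * (\<Sum>k<N. a k powr q) powr (p-1)"
proof -
  define S where "S = (\<Sum>k<N. a k powr q)"
  define r where "r = (2::real) powr (-(p-2))"
  have "(2::real) powr (-(p-2)) < 2 powr 0" using p by (subst powr_less_cancel_iff) auto
  hence r: "0 < r" "r < 1" unfolding r_def by auto
  have a0: "\<forall>k<N. 0 \<le> a k" using za norm_ge_zero order_trans by blast
  have S0: "S \<ge> 0" unfolding S_def by (intro sum_nonneg) simp
  define X where "X j = cmod (xvec N z j)" for j
  have X0: "X j \<ge> 0" for j unfolding X_def by simp
  show ?thesis
  proof (cases "S = 0")
    case True
    have "\<forall>k<N. a k powr q = 0"
      using True unfolding S_def by (subst (asm) sum_nonneg_eq_0_iff) auto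
    hence "\<forall>k<N. a k = 0" by simp
    hence "\<forall>k<N. z k = 0" using za by (metis norm_le_zero_iff)
    hence "xvec N z j = 0" for j unfolding xvec_def by simp
    thus ?thesis using p True unfolding S_def[symmetric] by simp
  next
    case False
    hence Spos: "S > 0" using S0 by simp
    define M where "M = 1 + (\<Sum>j<N. X j)"
    have Mpos: "M > 0" unfolding M_def using X0 by (smt (verit) sum_nonneg)
    have XM: "X j \<le> M" if "j < N" for j
    proof -
      have "X j \<le> (\<Sum>j<N. X j)" using that X0 by (intro member_le_sum) auto
      thus ?thesis unfolding M_def by simp
    qed
    define t where "t n = M / 2^n" for n :: nat
    have tpos: "t n > 0" for n unfolding t_def using Mpos by simp
    define lv where "lv n = (S / t n) powr (p-1)" for n
    have ex: "\<exists>n. X j > 0 \<longrightarrow> (2 * t n < X j \<and> X j \<le> 4 * t n)" if "j < N" for j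
    proof (cases "X j > 0")
      case True
      obtain m where m: "2*M / X j < 2^m" using real_arch_pow[of 2 "2*M / X j"] by auto
      define P where "P n = (2 * t n < X j)" for n
      have Pm: "P m" using m True unfolding P_def t_def by (simp add: field_simps)
      define n where "n = (LEAST n. P n)"
      have Pn: "P n" unfolding n_def by (rule LeastI, rule Pm)
      have n0: "n \<noteq> 0"
      proof
        assume "n = 0"
        hence "2 * M < X j" using Pn unfolding P_def t_def by simp
        thus False using XM[OF that] Mpos by simp
      qed
      then obtain n' where n': "n = Suc n'" by (cases n) auto
      have "\<not> P n'" using n' unfolding n_def by (metis lessI not_less_Least)
      hence "X j \<le> 2 * (M/2^n')" unfolding P_def t_def by simp
      also have "\<dots> = 4 * t n" unfolding t_def n' by (simp add: field_simps)
      finally show ?thesis using Pn unfolding P_def by blast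
    qed simp
    obtain f where f: "\<And>j. j < N \<Longrightarrow> X j > 0 \<Longrightarrow> 2 * t (f j) < X j \<and> X j \<le> 4 * t (f j)"
      using ex by metis
    define L where "L = Suc (\<Sum>j<N. f j)"
    have fL: "f j < L" if "j < N" for j
    proof -
      have "f j \<le> (\<Sum>j<N. f j)" using that by (intro member_le_sum) auto
      thus ?thesis unfolding L_def by simp
    qed
    have pw: "X j powr p \<le> 4 powr p * (\<Sum>n<L. if 2 * t n < X j then t n powr p else 0)"
      if "j < N" for j
    proof (cases "X j > 0")
      case False
      hence "X j = 0" using X0[of j] by simp
      thus ?thesis using p by (simp add: sum_nonneg)
    next
      case True
      have fj: "2 * t (f j) < X j" "X j \<le> 4 * t (f j)" using f[OF that True] by auto
      have "X j powr p \<le> (4 * t (f j)) powr p" using fj True p by (intro powr_mono2) auto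
      also have "\<dots> = 4 powr p * t (f j) powr p" by (simp add: powr_mult)
      also have "t (f j) powr p \<le> (\<Sum>n<L. if 2 * t n < X j then t n powr p else 0)"
      proof -
        have "t (f j) powr p = (if 2 * t (f j) < X j then t (f j) powr p else 0)" using fj by simp
        also have "\<dots> \<le> (\<Sum>n<L. if 2 * t n < X j then t n powr p else 0)"
          by (rule member_le_sum[where f="\<lambda>n. if 2 * t n < X j then t n powr p else 0"])
             (use fL[OF that] in auto)
        finally show ?thesis .
      qed
      hence "4 powr p * t (f j) powr p \<le> 4 powr p * (\<Sum>n<L. if 2 * t n < X j then t n powr p else 0)"
        by (intro mult_left_mono) auto
      finally show ?thesis .
    qed
    have cnt: "(\<Sum>j<N. if 2 * t n < X j then t n powr p else 0)
               = t n powr p * real (card {j. j<N \<and> 2 * t n < X j})" for n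
    proof -
      have "(\<Sum>j<N. if 2 * t n < X j then t n powr p else 0) = (\<Sum>j\<in>{j\<in>{..<N}. 2 * t n < X j}. t n powr p)"
        by (rule sum.inter_filter[symmetric]) simp
      also have "{j\<in>{..<N}. 2 * t n < X j} = {j. j<N \<and> 2 * t n < X j}" by auto
      finally show ?thesis by simp
    qed
    define c where "c n k = (if a k \<le> lv n then (a k)^2 else 0)" for n k
    have pern: "t n powr p * real (card {j. j<N \<and> 2 * t n < X j})
                \<le> t n powr (p-2) * (real N * (\<Sum>k<N. c n k))" for n
    proof -
      have big: "(\<Sum>k<N. if lv n < a k then a k else 0) \<le> t n"
        unfolding lv_def by (rule big_bound[OF p q S_def Spos a0 tpos])
      have cb: "real (card {j. j<N \<and> 2 * t n < X j}) * (t n)^2 \<le> real N * (\<Sum>k<N. c n k)"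
        using count_bound[OF za tpos big] unfolding X_def c_def by simp
      have "t n powr (p-2) * (t n)^2 = t n powr (p-2) * t n powr 2" using tpos[of n] by simp
      also have "\<dots> = t n powr p" by (simp add: powr_add[symmetric])
      finally have "t n powr p = t n powr (p-2) * (t n)^2" by simp
      hence "t n powr p * real (card {j. j<N \<and> 2 * t n < X j})
             = t n powr (p-2) * (real (card {j. j<N \<and> 2 * t n < X j}) * (t n)^2)" by simp
      also have "\<dots> \<le> t n powr (p-2) * (real N * (\<Sum>k<N. c n k))"
        using cb by (intro mult_left_mono) auto
      finally show ?thesis .
    qed
    have perk: "(\<Sum>n<L. t n powr (p-2) * c n k) \<le> S powr (p-2) * a k powr q / (1 - r)"
      if "k < N" for k
    proof (cases "a k = 0")
      case True
      hence "c n k = 0" for n unfolding c_def by simp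
      thus ?thesis using True by simp
    next
      case False
      hence ak: "a k > 0" using a0 that by force
      define T where "T = S * a k powr (-(1/(p-1)))"
      have Tpos: "T > 0" unfolding T_def using Spos ak by simp
      have imp: "t n \<le> T" if "a k \<le> lv n" for n
      proof -
        have "a k powr (1/(p-1)) \<le> (lv n) powr (1/(p-1))"
          using that ak p by (intro powr_mono2) auto
        also have "\<dots> = S / t n" unfolding lv_def using p Spos tpos[of n]
          by (simp add: powr_powr)
        finally have "a k powr (1/(p-1)) \<le> S / t n" .
        hence "t n \<le> S / a k powr (1/(p-1))" using tpos[of n] ak
          by (simp add: field_simps)
        thus ?thesis unfolding T_def by (simp add: powr_minus_divide)
      qed
      have "(\<Sum>n<L. t n powr (p-2) * c n k) = (a k)^2 * (\<Sum>n<L. if a k \<le> lv n then t n powr (p-2) else 0)"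
        unfolding c_def by (simp add: sum_distrib_left if_distrib mult.commute cong: if_cong)
      also have "(\<Sum>n<L. if a k \<le> lv n then t n powr (p-2) else 0)
                 \<le> (\<Sum>n<L. if t n \<le> T then t n powr (p-2) else 0)"
        by (intro sum_mono) (use imp in auto)
      also have "\<dots> = (\<Sum>n\<in>{n. n<L \<and> M/2^n \<le> T}. (M/2^n) powr (p-2))"
      proof -
        have "(\<Sum>n<L. if t n \<le> T then t n powr (p-2) else 0) = (\<Sum>n\<in>{n\<in>{..<L}. t n \<le> T}. t n powr (p-2))"
          by (rule sum.inter_filter[symmetric]) simp
        also have "{n\<in>{..<L}. t n \<le> T} = {n. n<L \<and> M/2^n \<le> T}" unfolding t_def by auto
        finally show ?thesis unfolding t_def by simp
      qed
      also have "\<dots> \<le> T powr (p-2) / (1 - 2 powr (-(p-2)))"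
        by (rule geom_bound[OF Mpos _ Tpos]) (use p in simp)
      finally have A: "(\<Sum>n<L. t n powr (p-2) * c n k) \<le> (a k)^2 * (T powr (p-2) / (1 - r))"
        unfolding r_def by (simp add: mult_left_mono)
      have "(a k)^2 * T powr (p-2) = S powr (p-2) * a k powr q"
      proof -
        have e: "2 + (-(1/(p-1)) * (p-2)) = q" using p q by (simp add: field_simps)
        have "(a k)^2 * T powr (p-2) = S powr (p-2) * (a k powr 2 * a k powr (-(1/(p-1)) * (p-2)))"
          unfolding T_def using ak by (simp add: powr_mult powr_powr)
        also have "a k powr 2 * a k powr (-(1/(p-1)) * (p-2)) = a k powr q"
          by (simp only: powr_add[symmetric] e)
        finally show ?thesis .
      qed
      thus ?thesis using A by simp
    qed
    have "(\<Sum>j<N. X j powr p) \<le> (\<Sum>j<N. 4 powr p * (\<Sum>n<L. if 2 * t n < X j then t n powr p else 0))"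
      by (intro sum_mono pw) simp
    also have "\<dots> = 4 powr p * (\<Sum>n<L. \<Sum>j<N. if 2 * t n < X j then t n powr p else 0)"
      by (simp add: sum_distrib_left[symmetric] sum.swap[of _ "{..<N}" "{..<L}"])
    also have "\<dots> = 4 powr p * (\<Sum>n<L. t n powr p * real (card {j. j<N \<and> 2 * t n < X j}))"
      by (simp add: cnt)
    also have "\<dots> \<le> 4 powr p * (\<Sum>n<L. t n powr (p-2) * (real N * (\<Sum>k<N. c n k)))"
      by (intro mult_left_mono sum_mono pern) auto
    also have "(\<Sum>n<L. t n powr (p-2) * (real N * (\<Sum>k<N. c n k))) = real N * (\<Sum>k<N. \<Sum>n<L. t n powr (p-2) * c n k)"
      by (simp add: sum_distrib_left sum.swap[of _ "{..<L}" "{..<N}"] mult_ac)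
    also have "(\<Sum>k<N. \<Sum>n<L. t n powr (p-2) * c n k) \<le> (\<Sum>k<N. S powr (p-2) * a k powr q / (1 - r))"
      by (intro sum_mono perk) simp
    also have "(\<Sum>k<N. S powr (p-2) * a k powr q / (1 - r)) = S powr (p-2) * S / (1 - r)"
      unfolding S_def by (simp add: sum_distrib_left sum_divide_distrib)
    also have "S powr (p-2) * S = S powr (p-1)"
    proof -
      have "S powr (p-2) * S = S powr (1 + (p-2))" using Spos powr_mult_base[of S "p-2"] by (simp add: mult.commute)
      also have "1 + (p-2) = p - 1" by simp
      finally show ?thesis .
    qed
    finally have fin: "(\<Sum>j<N. X j powr p) \<le> 4 powr p * (real N * (S powr (p-1) / (1 - r)))"
      using r by (simp add: mult_left_mono)
    show ?thesis using fin unfolding X_def S_def[symmetric] r_def[symmetric] by (simp add: field_simps)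
  qed
qed
definition Cp :: "real \<Rightarrow> real" where
  "Cp p = (if p = 2 then 1 else 4 powr p / (1 - 2 powr (-(p-2))))"

lemma Cp_nonneg: assumes "p \<ge> 2" shows "Cp p \<ge> 0"
proof (cases "p = 2")
  case False
  hence "(2::real) powr (-(p-2)) < 2 powr 0" using assms by (subst powr_less_cancel_iff) auto
  thus ?thesis using False unfolding Cp_def by simp
qed (simp add: Cp_def)

lemma HYall:
  fixes z :: "nat \<Rightarrow> complex" and a :: "nat \<Rightarrow> real"
  assumes p: "p \<ge> 2" and q: "q = p/(p-1)" and za: "\<forall>k<N. cmod (z k) \<le> a k"
  shows "(\<Sum>j<N. cmod (xvec N z j) powr p) \<le> Cp p * real N * (\<Sum>k<N. a k powr q) powr (p-1)"
proof (cases "p = 2")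
  case False
  hence "p > 2" using p by simp
  from HY[OF this q za] show ?thesis using False unfolding Cp_def by simp
next
  case True
  hence q2: "q = 2" using q by simp
  have a0: "\<forall>k<N. 0 \<le> a k" using za norm_ge_zero order_trans by blast
  have "(\<Sum>j<N. cmod (xvec N z j) powr p) = (\<Sum>j<N. (cmod (xvec N z j))^2)"
    using True by simp
  also have "\<dots> = real N * (\<Sum>k<N. (cmod (z k))^2)" unfolding xvec_def by (rule parseval)
  also have "\<dots> \<le> real N * (\<Sum>k<N. (a k)^2)"
    by (intro mult_left_mono sum_mono power_mono) (use za in auto)
  also have "(\<Sum>k<N. (a k)^2) = (\<Sum>k<N. a k powr q) powr (p-1)"
  proof -
    have "(\<Sum>k<N. a k powr q) = (\<Sum>k<N. (a k)^2)" using a0 q2 by (intro sum.cong refl) simp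
    moreover have "(\<Sum>k<N. (a k)^2) \<ge> 0" by (intro sum_nonneg) simp
    ultimately show ?thesis using True by simp
  qed
  finally show ?thesis using True unfolding Cp_def by simp
qed

lemma wk_bound:
  assumes mu: "\<mu> > 1" and N: "N \<ge> 2" and k: "1 \<le> k" "k < N" and q: "q \<ge> 0"
    and rho: "\<And>k. k \<ge> 1 \<Longrightarrow> \<rho> k > 0"
  shows "(rr \<rho> N k / sqrt \<bar>lam (\<mu> * gamma1 N) N k\<bar>) powr q
         \<le> (3 / sqrt (\<mu> - 1)) powr q * (\<rho> (min k (N-k)) / real (min k (N-k))) powr q"
proof -
  define m where "m = min k (N-k)"
  have m1: "1 \<le> m" using k unfolding m_def by auto
  have rrk: "rr \<rho> N k = \<rho> m" unfolding rr_def m_def using k by simp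
  have lb: "(\<mu> - 1) * (real m)^2 / 9 \<le> lam (\<mu> * gamma1 N) N k"
    using lam_bound[OF mu N k] unfolding m_def .
  have lpos: "0 < (\<mu> - 1) * (real m)^2 / 9" using mu m1 by simp
  have eqs: "sqrt ((\<mu> - 1) * (real m)^2 / 9) = sqrt (\<mu> - 1) * real m / 3"
    by (simp add: real_sqrt_mult real_sqrt_divide)
  have "(\<mu> - 1) * (real m)^2 / 9 \<le> \<bar>lam (\<mu> * gamma1 N) N k\<bar>" using lb by linarith
  hence "sqrt ((\<mu> - 1) * (real m)^2 / 9) \<le> sqrt \<bar>lam (\<mu> * gamma1 N) N k\<bar>" by (rule real_sqrt_le_mono)
  hence sq: "sqrt (\<mu> - 1) * real m / 3 \<le> sqrt \<bar>lam (\<mu> * gamma1 N) N k\<bar>" unfolding eqs .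
  have sqpos: "0 < sqrt (\<mu> - 1) * real m / 3" using mu m1 by simp
  have rpos: "\<rho> m > 0" using rho m1 by simp
  have "rr \<rho> N k / sqrt \<bar>lam (\<mu> * gamma1 N) N k\<bar> \<le> \<rho> m / (sqrt (\<mu> - 1) * real m / 3)"
  proof -
    have slpos: "0 < sqrt \<bar>lam (\<mu> * gamma1 N) N k\<bar>" using sq sqpos by linarith
    show ?thesis unfolding rrk using sq sqpos rpos mult_pos_pos[OF sqpos slpos]
      by (intro divide_left_mono) (auto simp: mult_ac)
  qed
  also have "\<dots> = (3 / sqrt (\<mu> - 1)) * (\<rho> m / real m)" by simp
  finally have "(rr \<rho> N k / sqrt \<bar>lam (\<mu> * gamma1 N) N k\<bar>) powr q \<le> ((3 / sqrt (\<mu> - 1)) * (\<rho> m / real m)) powr q"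
    using rpos sq sqpos q rrk by (intro powr_mono2) auto
  thus ?thesis unfolding m_def powr_mult .
qed

lemma wsum:
  assumes mu: "\<mu> > 1" and N: "N \<ge> 2" and q: "q \<ge> 0"
    and rho: "\<And>k. k \<ge> 1 \<Longrightarrow> \<rho> k > 0"
    and summ: "summable (\<lambda>k. (\<rho> (Suc k) / real (Suc k)) powr q)"
  shows "(\<Sum>k<N. (rr \<rho> N k / sqrt \<bar>lam (\<mu> * gamma1 N) N k\<bar>) powr q)
         \<le> 1 + 2 * (3 / sqrt (\<mu> - 1)) powr q * (\<Sum>k. (\<rho> (Suc k) / real (Suc k)) powr q)"
proof -
  define w where "w k = (rr \<rho> N k / sqrt \<bar>lam (\<mu> * gamma1 N) N k\<bar>) powr q" for k
  define g where "g m = (\<rho> m / real m) powr q" for m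
  define C where "C = (3 / sqrt (\<mu> - 1)) powr q"
  have C0: "C \<ge> 0" unfolding C_def by simp
  have g0: "g m \<ge> 0" for m unfolding g_def by simp
  have w0: "w 0 = 1" unfolding w_def rr_def lam_def by simp
  have wk: "w k \<le> C * (g k + g (N-k))" if "k \<in> {1..<N}" for k
  proof -
    have "w k \<le> C * g (min k (N-k))" using wk_bound[OF mu N _ _ q rho] that
      unfolding w_def C_def g_def by auto
    also have "g (min k (N-k)) \<le> g k + g (N-k)" using g0 by (cases "k \<le> N-k") (auto simp: min_def)
    hence "C * g (min k (N-k)) \<le> C * (g k + g (N-k))" using C0 by (rule mult_left_mono)
    finally show ?thesis .
  qed
  have split: "(\<Sum>k<N. w k) = w 0 + (\<Sum>k\<in>{1..<N}. w k)"
  proof -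
    have "(\<Sum>k<N. w k) = (\<Sum>k\<in>{0..<N}. w k)" by (simp add: atLeast0LessThan)
    also have "\<dots> = w 0 + (\<Sum>k\<in>{Suc 0..<N}. w k)" using N by (subst sum.atLeast_Suc_lessThan) auto
    finally show ?thesis by simp
  qed
  have rev: "(\<Sum>k\<in>{1..<N}. g (N-k)) = (\<Sum>k\<in>{1..<N}. g k)"
  proof (rule sum.reindex_bij_witness[where i="\<lambda>k. N-k" and j="\<lambda>k. N-k"]) qed auto
  have tail: "(\<Sum>k\<in>{1..<N}. g k) \<le> (\<Sum>k. g (Suc k))"
  proof -
    have "(\<Sum>k\<in>{1..<N}. g k) = (\<Sum>k<N-1. g (Suc k))"
    proof (rule sum.reindex_bij_witness[where i="\<lambda>k. Suc k" and j="\<lambda>k. k - 1"]) qed auto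
    also have "\<dots> \<le> (\<Sum>k. g (Suc k))"
      by (rule sum_le_suminf) (use summ g0 in \<open>auto simp: g_def\<close>)
    finally show ?thesis .
  qed
  have "(\<Sum>k<N. w k) \<le> 1 + (\<Sum>k\<in>{1..<N}. C * (g k + g (N-k)))"
    unfolding split w0 by (intro add_left_mono sum_mono) (use wk in auto)
  also have "(\<Sum>k\<in>{1..<N}. C * (g k + g (N-k))) = 2 * C * (\<Sum>k\<in>{1..<N}. g k)"
    by (simp add: sum_distrib_left[symmetric] sum.distrib rev[simplified])
  also have "1 + 2 * C * (\<Sum>k\<in>{1..<N}. g k) \<le> 1 + 2 * C * (\<Sum>k. g (Suc k))" using tail C0 by (simp add: mult_left_mono)
  finally show ?thesis unfolding w_def C_def g_def .
qed

theorem lemma4p3: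
  fixes \<mu> p q :: real and \<rho> :: "nat \<Rightarrow> real"
  assumes "\<mu> > 1" and "p \<ge> 2" and "q = p / (p - 1)"
    and "\<And>k. k \<ge> 1 \<Longrightarrow> \<rho> k > 0"
    and "\<And>k l. 1 \<le> k \<Longrightarrow> k \<le> l \<Longrightarrow> \<rho> k \<le> \<rho> l"
    and "summable (\<lambda>k. (\<rho> (Suc k) / real (Suc k)) powr q)"
  shows "\<exists>B::real. \<forall>N \<ge> 3. \<forall>\<delta> > 0. \<forall>z \<in> Cdelta \<delta> (\<mu> * gamma1 N) \<rho> N.
           pnorm_pow p N (xvec N z) \<le> \<delta> powr p * real N * B"
proof -
  note mu = assms(1) and p = assms(2) and q = assms(3) and rho = assms(4) and summ = assms(6)
  have q0: "q \<ge> 0" using p q by simp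
  define K where "K = 1 + 2 * (3 / sqrt (\<mu> - 1)) powr q * (\<Sum>k. (\<rho> (Suc k) / real (Suc k)) powr q)"
  show ?thesis
  proof (intro exI[of _ "Cp p * K powr (p-1)"] allI impI ballI)
    fix N :: nat and \<delta> :: real and z
    assume N3: "N \<ge> 3" and d: "\<delta> > 0" and zC: "z \<in> Cdelta \<delta> (\<mu> * gamma1 N) \<rho> N"
    have N2: "N \<ge> 2" using N3 by simp
    define w where "w k = rr \<rho> N k / sqrt \<bar>lam (\<mu> * gamma1 N) N k\<bar>" for k
    define a where "a k = \<delta> * w k" for k
    have za: "\<forall>k<N. cmod (z k) \<le> a k" using zC unfolding Cdelta_def a_def w_def by auto
    have wnn: "w k \<ge> 0" for k
    proof -
      have "rr \<rho> N k > 0"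
      proof (cases "k mod N = 0")
        case False
        have "k mod N < N" using N2 by simp
        hence "1 \<le> min (k mod N) (N - k mod N)" using False by simp
        thus ?thesis using False rho unfolding rr_def by simp
      qed (simp add: rr_def)
      thus ?thesis unfolding w_def by simp
    qed
    have W: "(\<Sum>k<N. w k powr q) \<le> K" unfolding w_def K_def by (rule wsum[OF mu N2 q0 rho summ])
    have Wnn: "(\<Sum>k<N. w k powr q) \<ge> 0" by (intro sum_nonneg) simp
    have sa: "(\<Sum>k<N. a k powr q) = \<delta> powr q * (\<Sum>k<N. w k powr q)"
      unfolding a_def by (simp add: powr_mult sum_distrib_left)
    have "(\<Sum>k<N. a k powr q) powr (p-1) = \<delta> powr (q*(p-1)) * (\<Sum>k<N. w k powr q) powr (p-1)"
      unfolding sa by (simp add: powr_mult powr_powr)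
    also have "q*(p-1) = p" using p q by simp
    finally have sa2: "(\<Sum>k<N. a k powr q) powr (p-1) = \<delta> powr p * (\<Sum>k<N. w k powr q) powr (p-1)" .
    have "pnorm_pow p N (xvec N z) \<le> Cp p * real N * (\<Sum>k<N. a k powr q) powr (p-1)"
      unfolding pnorm_pow_def by (rule HYall[OF p q za])
    also have "\<dots> = Cp p * real N * \<delta> powr p * (\<Sum>k<N. w k powr q) powr (p-1)" unfolding sa2 by simp
    also have "\<dots> \<le> Cp p * real N * \<delta> powr p * K powr (p-1)"
      using Cp_nonneg[OF p] W Wnn p by (intro mult_left_mono powr_mono2) auto
    also have "\<dots> = \<delta> powr p * real N * (Cp p * K powr (p-1))" by simp
    finally show "pnorm_pow p N (xvec N z) \<le> \<delta> powr p * real N * (Cp p * K powr (p-1))" .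
  qed
qed

end
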